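(* In the setting described in the context, there exists a constant $C$ such that $$|p(x)-\widehat p(x)|\le C\,\phi(x)^2\qquad\text{for all }x\in U_\delta.$$
   Context: $n\in\{1,2\}$; $\Gamma\subset\mathbb R^{n+1}$ is a smooth, connected, compact, orientable hypersurface without boundary with unit outer normal $\nu$; $d$ is the signed distance to $\Gamma$ (negative inside), and $\Omega$ is an open neighbourhood of $\Gamma$ on which $d$ is smooth, so that $\widehat p(x)=x-d(x)\nabla d(x)$ is the closest point on $\Gamma$ to $x\in\Omega$. $A=(a_{ij})$ with $a_{ij}\in C^2(\Gamma)$ symmetric, $\sum_{i,j}a_{ij}(x)\xi_i\nu_j(x)=0$ and $\sum_{i,j}a_{ij}(x)\xi_i\xi_j\ge\alpha|\xi|^2$ for $\xi\in T_x\Gamma$ ($\alpha>0$), and $A(x)\nu(x)=\nu(x)$. $\phi:\overline\Omega\to\mathbb R$ is smooth with $\Gamma=\{\phi=0\}$ and $0<c_0\le|\nabla\phi|\le c_1$ on $\overline\Omega$; $U_r=\{x\in\Omega:|\phi(x)|<r\}$. $\delta>0$ is such that for every $p\in\Gamma$ the ODE $\gamma_p'(s)=\frac{A(p)\nabla\phi(\gamma_p(s))}{A(p)\nabla\phi(\gamma_p(s))\cdot\nabla\phi(\gamma_p(s))}$, $\gamma_p(0)=p$, has a unique solution on $(-\delta,\delta)$; $F(p,s)=\gamma_p(s)$ is then a $C^2$ bijection of $\Gamma\times(-\delta,\delta)$ onto $U_\delta$, and since $\phi(\gamma_p(s))=s$ its inverse is $F^{-1}(x)=(p(x),\phi(x))$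 with $p\in C^2(U_\delta;\mathbb R^{n+1})$, $p(x)\in\Gamma$. *)

theory Defs
  imports "HOL-Analysis.Analysis"
begin

definition grad :: "('a::euclidean_space \<Rightarrow> real) \<Rightarrow> 'a \<Rightarrow> 'a" where
  "grad f x = (\<Sum>b\<in>Basis. frechet_derivative f (at x) b *\<^sub>R b)"

fun Ck_on :: "nat \<Rightarrow> 'a::euclidean_space set \<Rightarrow> ('a \<Rightarrow> 'b::real_normed_vector) \<Rightarrow> bool" where
  "Ck_on 0 S f = continuous_on S f"
| "Ck_on (Suc k) S f = (f differentiable_on S \<and>
      (\<forall>b\<in>Basis. Ck_on k S (\<lambda>x. frechet_derivative f (at x) b)))"

definition smooth_on :: "'a::euclidean_space set \<Rightarrow> ('a \<Rightarrow> 'b::real_normed_vector) \<Rightarrow> bool" where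
  "smooth_on S f = (\<forall>k. Ck_on k S f)"

definition Ck_on_surface :: "nat \<Rightarrow> 'a::euclidean_space set \<Rightarrow> ('a \<Rightarrow> real) \<Rightarrow> bool" where
  "Ck_on_surface k \<Gamma> f = (\<exists>W g. open W \<and> \<Gamma> \<subseteq> W \<and> Ck_on k W g \<and> (\<forall>x\<in>\<Gamma>. g x = f x))"

definition tangent_space :: "'a::euclidean_space set \<Rightarrow> 'a \<Rightarrow> 'a set" where
  "tangent_space \<Gamma> x = {v. \<exists>c::real \<Rightarrow> 'a. c 0 = x \<and> (\<forall>t. c t \<in> \<Gamma>) \<and>
        (c has_vector_derivative v) (at 0)}"

definition is_unit_outer_normal :: "'a::euclidean_space set \<Rightarrow> 'a \<Rightarrow> 'a \<Rightarrow> bool" where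
  "is_unit_outer_normal \<Gamma> x n = (norm n = 1 \<and> (\<forall>v\<in>tangent_space \<Gamma> x. n \<bullet> v = 0) \<and>
        (\<exists>e>0. \<forall>t. 0 < t \<and> t < e \<longrightarrow> x + t *\<^sub>R n \<in> outside \<Gamma>))"

definition signed_dist :: "'a::euclidean_space set \<Rightarrow> 'a \<Rightarrow> real" where
  "signed_dist \<Gamma> x = (if x \<in> inside \<Gamma> then - infdist x \<Gamma> else infdist x \<Gamma>)"

definition hat_p :: "'a::euclidean_space set \<Rightarrow> 'a \<Rightarrow> 'a" where
  "hat_p \<Gamma> x = x - signed_dist \<Gamma> x *\<^sub>R grad (signed_dist \<Gamma>) x"

definition flow_field :: "('a::euclidean_space \<Rightarrow> 'a \<Rightarrow> 'a) \<Rightarrow> ('a \<Rightarrow> real) \<Rightarrow> 'a \<Rightarrow> 'a \<Rightarrow> 'a" where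
  "flow_field A \<phi> q y = (1 / (A q (grad \<phi> y) \<bullet> grad \<phi> y)) *\<^sub>R A q (grad \<phi> y)"

end

theory Submission
  imports Defs
begin

lemma Ck_on_cong:
  assumes "open S" "\<And>x. x \<in> S \<Longrightarrow> f x = g x"
  shows "Ck_on k S f = Ck_on k S g"
  using assms(2)
proof (induction k arbitrary: f g)
  case 0
  then show ?case using continuous_on_cong by auto
next
  case (Suc k)
  have fd: "frechet_derivative f (at x) = frechet_derivative g (at x)" if "x \<in> S" for x
  proof -
    have "(f has_derivative D) (at x) \<longleftrightarrow> (g has_derivative D) (at x)" for D
    proof
      assume "(f has_derivative D) (at x)"
      from has_derivative_transform_within_open[OF this assms(1) that] Suc.prems
      show "(g has_derivative D) (at x)" by auto
    next
      assume "(g has_derivative D) (at x)"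
      from has_derivative_transform_within_open[OF this assms(1) that, of f] Suc.prems
      show "(f has_derivative D) (at x)" by auto
    qed
    then show ?thesis unfolding frechet_derivative_def by simp
  qed
  have dd: "f differentiable (at x) \<longleftrightarrow> g differentiable (at x)" if "x \<in> S" for x
  proof
    assume "f differentiable (at x)"
    then obtain f' where "(f has_derivative f') (at x)" by (auto simp: differentiable_def)
    from has_derivative_transform_within_open[OF this assms(1) that] Suc.prems
    show "g differentiable (at x)" by (auto simp: differentiable_def)
  next
    assume "g differentiable (at x)"
    then obtain f' where "(g has_derivative f') (at x)" by (auto simp: differentiable_def)
    from has_derivative_transform_within_open[OF this assms(1) that, of f] Suc.prems
    show "f differentiable (at x)" by (auto simp: differentiable_def)
  qed
  have "(f differentiable_on S) = (g differentiable_on S)"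
    using dd by (simp add: differentiable_on_eq_differentiable_at[OF assms(1)])
  moreover have "Ck_on k S (\<lambda>x. frechet_derivative f (at x) b) = Ck_on k S (\<lambda>x. frechet_derivative g (at x) b)" for b
    using Suc.IH[of "\<lambda>x. frechet_derivative f (at x) b" "\<lambda>x. frechet_derivative g (at x) b"] fd by auto
  ultimately show ?case by simp
qed

lemma Ck_on_subset: "Ck_on k S f \<Longrightarrow> T \<subseteq> S \<Longrightarrow> Ck_on k T f"
  by (induction k arbitrary: f) (auto intro: continuous_on_subset differentiable_on_subset)

lemma Ck_on_Suc_imp: "Ck_on (Suc k) S f \<Longrightarrow> Ck_on k S f"
proof (induction k arbitrary: f)
  case 0
  then show ?case by (simp add: differentiable_imp_continuous_on)
next
  case (Suc k)
  then show ?case by simp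
qed

lemma Ck_on_le: "Ck_on k S f \<Longrightarrow> m \<le> k \<Longrightarrow> Ck_on m S f"
proof (induction k)
  case 0 then show ?case by simp
next
  case (Suc k)
  then show ?case using Ck_on_Suc_imp[of k S f] le_Suc_eq by blast
qed

lemma smooth_on_Ck: "smooth_on S f \<Longrightarrow> Ck_on k S f"
  by (simp add: smooth_on_def)

lemma Ck_on_const: "Ck_on k S (\<lambda>x. c)"
  by (induction k arbitrary: c) auto

lemma Ck_on_diffble_at: "Ck_on (Suc k) S f \<Longrightarrow> open S \<Longrightarrow> x \<in> S \<Longrightarrow> f differentiable (at x)"
  by (simp add: differentiable_on_eq_differentiable_at)

lemma Ck_on_id: "open S \<Longrightarrow> Ck_on k S (\<lambda>x. x)"
proof (cases k)
  case 0 then show ?thesis by (simp add: continuous_on_id)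
next
  case (Suc m)
  then show ?thesis by (simp add: Ck_on_const)
qed

lemma Ck_on_add:
  assumes "open S" shows "Ck_on k S f \<Longrightarrow> Ck_on k S g \<Longrightarrow> Ck_on k S (\<lambda>x. f x + g x)"
proof (induction k arbitrary: f g)
  case 0 then show ?case by (auto intro: continuous_on_add)
next
  case (Suc k)
  have e: "frechet_derivative (\<lambda>x. f x + g x) (at x) b = frechet_derivative f (at x) b + frechet_derivative g (at x) b"
    if "x \<in> S" for x b
  proof -
    have "f differentiable (at x)" "g differentiable (at x)" using Suc.prems that assms Ck_on_diffble_at by blast+
    then have "((\<lambda>x. f x + g x) has_derivative (\<lambda>h. frechet_derivative f (at x) h + frechet_derivative g (at x) h)) (at x)"
      by (intro has_derivative_add) (auto simp: frechet_derivative_works)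
    then have "(\<lambda>h. frechet_derivative f (at x) h + frechet_derivative g (at x) h) = frechet_derivative (\<lambda>x. f x + g x) (at x)"
      by (rule frechet_derivative_at)
    from fun_cong[OF this, of b] show ?thesis by simp
  qed
  show ?case
  proof (simp, intro conjI ballI)
    show "(\<lambda>x. f x + g x) differentiable_on S" using Suc.prems by (auto intro: differentiable_on_add)
    fix b :: 'a assume b: "b \<in> Basis"
    have "Ck_on k S (\<lambda>x. frechet_derivative f (at x) b + frechet_derivative g (at x) b)"
      using Suc.prems b by (intro Suc.IH[of "\<lambda>x. frechet_derivative f (at x) b" "\<lambda>x. frechet_derivative g (at x) b"]) auto
    then show "Ck_on k S (\<lambda>x. frechet_derivative (\<lambda>x. f x + g x) (at x) b)"
      using Ck_on_cong[OF assms, of "\<lambda>x. frechet_derivative (\<lambda>x. f x + g x) (at x) b"] e by simp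
  qed
qed

lemma Ck_on_diff:
  assumes "open S" shows "Ck_on k S f \<Longrightarrow> Ck_on k S g \<Longrightarrow> Ck_on k S (\<lambda>x. f x - g x)"
proof (induction k arbitrary: f g)
  case 0 then show ?case by (auto intro: continuous_on_diff)
next
  case (Suc k)
  have e: "frechet_derivative (\<lambda>x. f x - g x) (at x) b = frechet_derivative f (at x) b - frechet_derivative g (at x) b"
    if "x \<in> S" for x b
  proof -
    have "f differentiable (at x)" "g differentiable (at x)" using Suc.prems that assms Ck_on_diffble_at by blast+
    then have "((\<lambda>x. f x - g x) has_derivative (\<lambda>h. frechet_derivative f (at x) h - frechet_derivative g (at x) h)) (at x)"
      by (intro has_derivative_diff) (auto simp: frechet_derivative_works)
    then have "(\<lambda>h. frechet_derivative f (at x) h - frechet_derivative g (at x) h) = frechet_derivative (\<lambda>x. f x - g x) (at x)"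
      by (rule frechet_derivative_at)
    from fun_cong[OF this, of b] show ?thesis by simp
  qed
  show ?case
  proof (simp, intro conjI ballI)
    show "(\<lambda>x. f x - g x) differentiable_on S" using Suc.prems by (auto intro: differentiable_on_diff)
    fix b :: 'a assume b: "b \<in> Basis"
    have "Ck_on k S (\<lambda>x. frechet_derivative f (at x) b - frechet_derivative g (at x) b)"
      using Suc.prems b by (intro Suc.IH[of "\<lambda>x. frechet_derivative f (at x) b" "\<lambda>x. frechet_derivative g (at x) b"]) auto
    then show "Ck_on k S (\<lambda>x. frechet_derivative (\<lambda>x. f x - g x) (at x) b)"
      using Ck_on_cong[OF assms, of "\<lambda>x. frechet_derivative (\<lambda>x. f x - g x) (at x) b"] e by simp
  qed
qed

lemma Ck_on_scaleR:
  fixes f :: "'a::euclidean_space \<Rightarrow> real" and g :: "'a \<Rightarrow> 'b::real_normed_vector"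
  assumes "open S" shows "Ck_on k S f \<Longrightarrow> Ck_on k S g \<Longrightarrow> Ck_on k S (\<lambda>x. f x *\<^sub>R g x)"
proof (induction k arbitrary: f g)
  case 0 then show ?case by (auto intro: continuous_on_scaleR)
next
  case (Suc k)
  have e: "frechet_derivative (\<lambda>x. f x *\<^sub>R g x) (at x) b = f x *\<^sub>R frechet_derivative g (at x) b + frechet_derivative f (at x) b *\<^sub>R g x"
    if "x \<in> S" for x b
  proof -
    have "f differentiable (at x)" "g differentiable (at x)" using Suc.prems that assms Ck_on_diffble_at by blast+
    then have "((\<lambda>x. f x *\<^sub>R g x) has_derivative (\<lambda>h. f x *\<^sub>R frechet_derivative g (at x) h + frechet_derivative f (at x) h *\<^sub>R g x)) (at x)"
      unfolding frechet_derivative_works by (rule has_derivative_scaleR)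
    then have "(\<lambda>h. f x *\<^sub>R frechet_derivative g (at x) h + frechet_derivative f (at x) h *\<^sub>R g x) = frechet_derivative (\<lambda>x. f x *\<^sub>R g x) (at x)"
      by (rule frechet_derivative_at)
    from fun_cong[OF this, of b] show ?thesis by simp
  qed
  show ?case
  proof (simp, intro conjI ballI)
    show "(\<lambda>x. f x *\<^sub>R g x) differentiable_on S" using Suc.prems by (simp add: differentiable_on_scaleR)
    fix b :: 'a assume b: "b \<in> Basis"
    have fk: "Ck_on k S f" "Ck_on k S g" using Suc.prems Ck_on_Suc_imp by blast+
    have "Ck_on k S (\<lambda>x. f x *\<^sub>R frechet_derivative g (at x) b + frechet_derivative f (at x) b *\<^sub>R g x)"
    proof (rule Ck_on_add[OF assms])
      show "Ck_on k S (\<lambda>x. f x *\<^sub>R frechet_derivative g (at x) b)"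
        using Suc.prems b fk by (intro Suc.IH[of f "\<lambda>x. frechet_derivative g (at x) b"]) auto
      show "Ck_on k S (\<lambda>x. frechet_derivative f (at x) b *\<^sub>R g x)"
        using Suc.prems b fk by (intro Suc.IH[of "\<lambda>x. frechet_derivative f (at x) b" g]) auto
    qed
    then show "Ck_on k S (\<lambda>x. frechet_derivative (\<lambda>x. f x *\<^sub>R g x) (at x) b)"
      using Ck_on_cong[OF assms, of "\<lambda>x. frechet_derivative (\<lambda>x. f x *\<^sub>R g x) (at x) b"] e by simp
  qed
qed

lemma Ck_on_sum:
  assumes "open S" "finite I" "\<And>i. i \<in> I \<Longrightarrow> Ck_on k S (f i)"
  shows "Ck_on k S (\<lambda>x. \<Sum>i\<in>I. f i x)"
  using assms(2,3)
proof (induction I rule: finite_induct)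
  case empty then show ?case by (simp add: Ck_on_const)
next
  case (insert i I)
  have "Ck_on k S (\<lambda>x. f i x + (\<Sum>i\<in>I. f i x))"
    using insert by (intro Ck_on_add[OF assms(1), of k "f i" "\<lambda>x. \<Sum>i\<in>I. f i x"]) auto
  then show ?case using insert by simp
qed



lemma fd_basis_expand:
  assumes "f differentiable (at x)"
  shows "frechet_derivative f (at x) h = (\<Sum>b\<in>Basis. (h \<bullet> b) *\<^sub>R frechet_derivative f (at x) b)"
proof -
  have lin: "linear (frechet_derivative f (at x))" by (rule linear_frechet_derivative[OF assms])
  have "frechet_derivative f (at x) h = frechet_derivative f (at x) (\<Sum>b\<in>Basis. (h \<bullet> b) *\<^sub>R b)"
    by (simp add: euclidean_representation)
  also have "\<dots> = (\<Sum>b\<in>Basis. frechet_derivative f (at x) ((h \<bullet> b) *\<^sub>R b))"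
    by (rule linear_sum[OF lin])
  also have "\<dots> = (\<Sum>b\<in>Basis. (h \<bullet> b) *\<^sub>R frechet_derivative f (at x) b)"
    using linear_scale[OF lin] by simp
  finally show ?thesis .
qed

lemma fd_grad:
  fixes f :: "'a::euclidean_space \<Rightarrow> real"
  assumes "f differentiable (at x)"
  shows "frechet_derivative f (at x) h = grad f x \<bullet> h"
  unfolding grad_def fd_basis_expand[OF assms, of h]
  by (simp add: inner_sum_right mult.commute inner_commute)

lemma has_derivative_grad:
  fixes f :: "'a::euclidean_space \<Rightarrow> real"
  assumes "f differentiable (at x)"
  shows "(f has_derivative (\<lambda>h. grad f x \<bullet> h)) (at x)"
proof -
  have "(f has_derivative frechet_derivative f (at x)) (at x)"
    using assms frechet_derivative_works by blast
  moreover have "frechet_derivative f (at x) = (\<lambda>h. grad f x \<bullet> h)"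
    using fd_grad[OF assms] by (intro ext) simp
  ultimately show ?thesis by simp
qed

lemma norm_fd_le:
  assumes "f differentiable (at x)"
  shows "norm (frechet_derivative f (at x) h) \<le> norm h * (\<Sum>b\<in>Basis. norm (frechet_derivative f (at x) b))"
proof -
  have "norm (frechet_derivative f (at x) h) \<le> (\<Sum>b\<in>Basis. norm ((h \<bullet> b) *\<^sub>R frechet_derivative f (at x) b))"
    unfolding fd_basis_expand[OF assms, of h] by (rule norm_sum)
  also have "\<dots> \<le> (\<Sum>b\<in>Basis. norm h * norm (frechet_derivative f (at x) b))"
    by (intro sum_mono) (simp add: Basis_le_norm mult_right_mono)
  finally show ?thesis by (simp add: sum_distrib_left)
qed

lemma compact_bound:
  assumes "continuous_on K f" "compact K"
  shows "\<exists>M. \<forall>y\<in>K. norm (f y) \<le> M"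
  using compact_imp_bounded[OF compact_continuous_image[OF assms]]
  by (auto simp: bounded_iff)

lemma Taylor2:
  fixes f :: "'a::euclidean_space \<Rightarrow> 'b::real_normed_vector"
  assumes S: "open S" and C2: "Ck_on 2 S f" and K: "compact K" "K \<subseteq> S"
  shows "\<exists>M. \<forall>q y. closed_segment q y \<subseteq> K \<longrightarrow>
            norm (f y - f q - frechet_derivative f (at q) (y - q)) \<le> M * (norm (y - q))\<^sup>2"
proof -
  define D where "D b x = frechet_derivative f (at x) b" for b x
  have C1: "Ck_on 1 S (D b)" if "b \<in> Basis" for b
    using C2 that by (simp add: D_def[abs_def] numeral_2_eq_2)
  have Ddiff: "D b differentiable (at x)" if "b \<in> Basis" "x \<in> S" for b x
    using C1[OF that(1)] S that(2) by (simp add: differentiable_on_eq_differentiable_at)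
  have DDcont: "continuous_on S (\<lambda>x. frechet_derivative (D b) (at x) c)" if "b \<in> Basis" "c \<in> Basis" for b c
    using C1[OF that(1)] that(2) by simp
  define \<Phi> where "\<Phi> x = (\<Sum>b\<in>Basis. \<Sum>c\<in>Basis. norm (frechet_derivative (D b) (at x) c))" for x
  have "continuous_on S \<Phi>"
    unfolding \<Phi>_def by (intro continuous_intros DDcont) auto
  then obtain M0 where M0: "\<And>y. y \<in> K \<Longrightarrow> norm (\<Phi> y) \<le> M0"
    using compact_bound[of K \<Phi>] K continuous_on_subset by blast
  have M0b: "(\<Sum>c\<in>Basis. norm (frechet_derivative (D b) (at y) c)) \<le> M0" if "b \<in> Basis" "y \<in> K" for b y
  proof -
    have "(\<Sum>c\<in>Basis. norm (frechet_derivative (D b) (at y) c)) \<le> \<Phi> y"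
      unfolding \<Phi>_def using that
      by (intro member_le_sum) (auto intro: sum_nonneg)
    also have "\<dots> \<le> M0" using M0[OF that(2)] by simp
    finally show ?thesis .
  qed
  have M0nn: "0 \<le> M0" if Kne0: "K \<noteq> {}"
  proof -
    obtain y where "y \<in> K" using Kne0 by blast
    from M0[OF this] show ?thesis by (meson norm_ge_zero order_trans)
  qed
  have Dlip: "norm (D b z - D b q) \<le> M0 * norm (z - q)"
    if "b \<in> Basis" "closed_segment q z \<subseteq> K" for b q z
  proof -
    have "norm (D b z - D b q) \<le> M0 * norm (z - q)"
    proof (rule differentiable_bound[where S="closed_segment q z" and f'="\<lambda>x. frechet_derivative (D b) (at x)"])
      show "convex (closed_segment q z)" by simp
      fix x assume x: "x \<in> closed_segment q z"
      then have xS: "x \<in> S" "x \<in> K" using that K by auto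
      show "(D b has_derivative frechet_derivative (D b) (at x)) (at x within closed_segment q z)"
        using Ddiff[OF that(1) xS(1)] frechet_derivative_works has_derivative_at_withinI by blast
      show "onorm (frechet_derivative (D b) (at x)) \<le> M0"
      proof (rule onorm_le)
        fix h
        have "norm (frechet_derivative (D b) (at x) h) \<le> norm h * (\<Sum>c\<in>Basis. norm (frechet_derivative (D b) (at x) c))"
          by (rule norm_fd_le[OF Ddiff[OF that(1) xS(1)]])
        also have "\<dots> \<le> norm h * M0"
          by (intro mult_left_mono M0b that xS) auto
        finally show "norm (frechet_derivative (D b) (at x) h) \<le> M0 * norm h" by (simp add: mult.commute)
      qed
    qed auto
    then show ?thesis .
  qed
  define M where "M = real DIM('a) * M0"
  have "norm (f y - f q - frechet_derivative f (at q) (y - q)) \<le> M * (norm (y - q))\<^sup>2"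
    if seg: "closed_segment q y \<subseteq> K" for q y
  proof -
    have Kne: "K \<noteq> {}" using seg by auto
    have fdiff: "f differentiable (at x)" if "x \<in> S" for x
      using C2 S that by (simp add: numeral_2_eq_2 differentiable_on_eq_differentiable_at)
    have "norm (f y - f q - frechet_derivative f (at q) (y - q)) \<le> norm (y - q) * (M * norm (y - q))"
    proof (rule differentiable_bound_linearization[where S="closed_segment q y" and f'="\<lambda>x. frechet_derivative f (at x)"])
      show "q + t *\<^sub>R (y - q) \<in> closed_segment q y" if "t \<in> {0..1}" for t
        using that by (auto simp: closed_segment_def algebra_simps intro!: exI[of _ t])
      fix x assume x: "x \<in> closed_segment q y"
      then have xS: "x \<in> S" "x \<in> K" using seg K by auto
      show "(f has_derivative frechet_derivative f (at x)) (at x within closed_segment q y)"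
        using fdiff[OF xS(1)] frechet_derivative_works has_derivative_at_withinI by blast
      have qS: "q \<in> S" using seg K by auto
      have segx: "closed_segment q x \<subseteq> K"
        using seg x by (meson closed_segment_subset convex_closed_segment ends_in_segment(1) subset_trans)
      have nxq: "norm (x - q) \<le> norm (y - q)"
        using x by (metis dist_commute dist_norm dist_in_closed_segment(1))
      show "onorm (frechet_derivative f (at x) - frechet_derivative f (at q)) \<le> M * norm (y - q)"
      proof (rule onorm_le)
        fix h
        have "(frechet_derivative f (at x) - frechet_derivative f (at q)) h
              = (\<Sum>b\<in>Basis. (h \<bullet> b) *\<^sub>R (D b x - D b q))"
          unfolding fun_diff_def fd_basis_expand[OF fdiff[OF xS(1)], of h] fd_basis_expand[OF fdiff[OF qS], of h]
          by (simp add: D_def sum_subtractf scaleR_diff_right)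
        also have "norm \<dots> \<le> (\<Sum>b\<in>Basis. norm ((h \<bullet> b) *\<^sub>R (D b x - D b q)))"
          by (rule norm_sum)
        also have "\<dots> \<le> (\<Sum>b\<in>(Basis::'a set). norm h * (M0 * norm (y - q)))"
        proof (rule sum_mono)
          fix b :: 'a assume b: "b \<in> Basis"
          have "norm (D b x - D b q) \<le> M0 * norm (x - q)" by (rule Dlip[OF b segx])
          also have "\<dots> \<le> M0 * norm (y - q)" using nxq M0nn[OF Kne] by (simp add: mult_left_mono)
          finally have "norm (D b x - D b q) \<le> M0 * norm (y - q)" .
          then show "norm ((h \<bullet> b) *\<^sub>R (D b x - D b q)) \<le> norm h * (M0 * norm (y - q))"
            using Basis_le_norm[OF b, of h] by (simp add: mult_mono)
        qed
        also have "\<dots> = M * norm (y - q) * norm h" by (simp add: M_def)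
        finally show "norm ((frechet_derivative f (at x) - frechet_derivative f (at q)) h) \<le> M * norm (y - q) * norm h" .
      qed
    next
      show "q \<in> closed_segment q y" by simp
    qed
    then show ?thesis by (simp add: power2_eq_square mult.commute mult.left_commute)
  qed
  then show ?thesis by blast
qed



lemma sym_linear:
  fixes f :: "'a::euclidean_space \<Rightarrow> 'a"
  assumes lin: "linear f" and sym: "\<forall>i\<in>Basis. \<forall>j\<in>Basis. i \<bullet> f j = j \<bullet> f i"
  shows "x \<bullet> f y = y \<bullet> f x"
proof -
  have e: "u \<bullet> f v = (\<Sum>i\<in>Basis. \<Sum>j\<in>Basis. (u \<bullet> i) * (v \<bullet> j) * (i \<bullet> f j))" for u v
  proof -
    have "f v = (\<Sum>j\<in>Basis. (v \<bullet> j) *\<^sub>R f j)"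
      by (metis (no_types, lifting) euclidean_representation lin linear_scale linear_sum sum.cong)
    moreover have "u = (\<Sum>i\<in>Basis. (u \<bullet> i) *\<^sub>R i)" by (simp add: euclidean_representation)
    ultimately have "u \<bullet> f v = (\<Sum>i\<in>Basis. (u \<bullet> i) *\<^sub>R i) \<bullet> (\<Sum>j\<in>Basis. (v \<bullet> j) *\<^sub>R f j)" by simp
    also have "\<dots> = (\<Sum>i\<in>Basis. \<Sum>j\<in>Basis. (u \<bullet> i) * (v \<bullet> j) * (i \<bullet> f j))"
      by (simp add: inner_sum_left inner_sum_right sum_distrib_left mult.assoc, subst sum.swap, simp add: mult.left_commute)
    finally show ?thesis .
  qed
  have "x \<bullet> f y = (\<Sum>i\<in>Basis. \<Sum>j\<in>Basis. (x \<bullet> i) * (y \<bullet> j) * (i \<bullet> f j))" by (rule e)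
  also have "\<dots> = (\<Sum>j\<in>Basis. \<Sum>i\<in>Basis. (x \<bullet> i) * (y \<bullet> j) * (i \<bullet> f j))" by (rule sum.swap)
  also have "\<dots> = (\<Sum>j\<in>Basis. \<Sum>i\<in>Basis. (y \<bullet> j) * (x \<bullet> i) * (j \<bullet> f i))"
    using sym by (intro sum.cong refl) (simp add: mult.commute)
  also have "\<dots> = y \<bullet> f x" by (rule e[symmetric])
  finally show ?thesis .
qed

lemma closest_alg:
  fixes y z q :: "'a::real_inner"
  assumes "dist y z \<le> dist y q"
  shows "(norm (z - q))\<^sup>2 \<le> 2 * ((y - q) \<bullet> (z - q))"
proof -
  have "(norm (y - z))\<^sup>2 \<le> (norm (y - q))\<^sup>2"
    using assms by (simp add: dist_norm power_mono)
  then have "(y - z) \<bullet> (y - z) \<le> (y - q) \<bullet> (y - q)" by (simp add: power2_norm_eq_inner)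
  moreover have "z - q = (y - q) - (y - z)" by simp
  ultimately show ?thesis
    by (simp add: power2_norm_eq_inner inner_diff_left inner_diff_right inner_commute algebra_simps)
qed

locale setting =
  fixes \<Gamma> \<Omega> :: "'a::euclidean_space set" and \<nu> :: "'a \<Rightarrow> 'a" and A :: "'a \<Rightarrow> 'a \<Rightarrow> 'a"
    and \<alpha> c0 c1 \<delta> :: real and \<phi> :: "'a \<Rightarrow> real" and \<gamma> :: "'a \<Rightarrow> real \<Rightarrow> 'a"
    and p :: "'a \<Rightarrow> 'a"
  assumes dim: "DIM('a) = 2 \<or> DIM('a) = 3"
    and \<Gamma>_compact: "compact \<Gamma>" and \<Gamma>_connected: "connected \<Gamma>" and \<Gamma>_ne: "\<Gamma> \<noteq> {}"
    and \<Omega>_open: "open \<Omega>" and \<Gamma>_sub: "\<Gamma> \<subseteq> \<Omega>"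
    and d_smooth: "smooth_on \<Omega> (signed_dist \<Gamma>)"
    and closest: "\<forall>x\<in>\<Omega>. hat_p \<Gamma> x \<in> \<Gamma> \<and> dist x (hat_p \<Gamma> x) = infdist x \<Gamma>"
    and normal: "\<forall>x\<in>\<Gamma>. is_unit_outer_normal \<Gamma> x (\<nu> x)"
    and A_linear: "\<forall>x\<in>\<Gamma>. linear (A x)"
    and A_C2: "\<forall>i\<in>Basis. \<forall>j\<in>Basis. Ck_on_surface 2 \<Gamma> (\<lambda>x. i \<bullet> A x j)"
    and A_sym: "\<forall>x\<in>\<Gamma>. \<forall>i\<in>Basis. \<forall>j\<in>Basis. i \<bullet> A x j = j \<bullet> A x i"
    and A_tan_nu: "\<forall>x\<in>\<Gamma>. \<forall>\<xi>\<in>tangent_space \<Gamma> x. \<xi> \<bullet> A x (\<nu> x) = 0"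
    and \<alpha>_pos: "\<alpha> > 0"
    and A_ell: "\<forall>x\<in>\<Gamma>. \<forall>\<xi>\<in>tangent_space \<Gamma> x. \<xi> \<bullet> A x \<xi> \<ge> \<alpha> * (norm \<xi>)\<^sup>2"
    and A_nu: "\<forall>x\<in>\<Gamma>. A x (\<nu> x) = \<nu> x"
    and \<phi>_smooth: "\<exists>W. open W \<and> closure \<Omega> \<subseteq> W \<and> smooth_on W \<phi>"
    and \<Gamma>_level: "\<Gamma> = {x\<in>closure \<Omega>. \<phi> x = 0}"
    and c0_pos: "0 < c0"
    and grad_bounds: "\<forall>x\<in>closure \<Omega>. c0 \<le> norm (grad \<phi> x) \<and> norm (grad \<phi> x) \<le> c1"
    and \<delta>_pos: "\<delta> > 0"
    and ode: "\<forall>q\<in>\<Gamma>. \<gamma> q 0 = q \<and> (\<forall>s\<in>{-\<delta><..<\<delta>}. \<gamma> q s \<in> closure \<Omega> \<and>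
                 (\<gamma> q has_vector_derivative flow_field A \<phi> q (\<gamma> q s)) (at s))"
    and ode_unique: "\<forall>q\<in>\<Gamma>. \<forall>\<eta>. \<eta> 0 = q \<and> (\<forall>s\<in>{-\<delta><..<\<delta>}. \<eta> s \<in> closure \<Omega> \<and>
                 (\<eta> has_vector_derivative flow_field A \<phi> q (\<eta> s)) (at s))
                 \<longrightarrow> (\<forall>s\<in>{-\<delta><..<\<delta>}. \<eta> s = \<gamma> q s)"
    and F_bij: "bij_betw (\<lambda>(q, s). \<gamma> q s) (\<Gamma> \<times> {-\<delta><..<\<delta>}) {x\<in>\<Omega>. \<bar>\<phi> x\<bar> < \<delta>}"
    and p_inv: "\<forall>x\<in>{x\<in>\<Omega>. \<bar>\<phi> x\<bar> < \<delta>}. p x \<in> \<Gamma> \<and> \<gamma> (p x) (\<phi> x) = x"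
    and p_C2: "Ck_on 2 {x\<in>\<Omega>. \<bar>\<phi> x\<bar> < \<delta>} p"
begin

lemma W_ex: obtains W where "open W" "closure \<Omega> \<subseteq> W" "smooth_on W \<phi>"
  using \<phi>_smooth by blast

lemma phi_diff: "x \<in> closure \<Omega> \<Longrightarrow> \<phi> differentiable (at x)"
proof -
  assume x: "x \<in> closure \<Omega>"
  obtain W where W: "open W" "closure \<Omega> \<subseteq> W" "smooth_on W \<phi>" by (rule W_ex)
  have "Ck_on 1 W \<phi>" using W(3) smooth_on_Ck by blast
  then show ?thesis using W x Ck_on_diffble_at[of 0 W \<phi> x] by auto
qed

lemma phi_isCont: "x \<in> closure \<Omega> \<Longrightarrow> isCont \<phi> x"
  using phi_diff differentiable_imp_continuous_within by blast

lemma phi_deriv: "x \<in> closure \<Omega> \<Longrightarrow> (\<phi> has_derivative (\<lambda>h. grad \<phi> x \<bullet> h)) (at x)"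
  using phi_diff has_derivative_grad by blast

lemma Gamma_facts: "q \<in> \<Gamma> \<Longrightarrow> q \<in> \<Omega> \<and> q \<in> closure \<Omega> \<and> \<phi> q = 0"
proof -
  assume q: "q \<in> \<Gamma>"
  have "q \<in> {x\<in>closure \<Omega>. \<phi> x = 0}" using q \<Gamma>_level by simp
  then show ?thesis using q \<Gamma>_sub by auto
qed

lemma in_Gamma: "z \<in> closure \<Omega> \<Longrightarrow> \<phi> z = 0 \<Longrightarrow> z \<in> \<Gamma>"
  using \<Gamma>_level by simp

lemma Gamma_closed: "closed \<Gamma>" using \<Gamma>_compact compact_imp_closed by blast

lemma grad_pos: "x \<in> closure \<Omega> \<Longrightarrow> norm (grad \<phi> x) \<ge> c0 \<and> grad \<phi> x \<noteq> 0"
proof -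
  assume x: "x \<in> closure \<Omega>"
  have "c0 \<le> norm (grad \<phi> x)" using grad_bounds x by blast
  then show ?thesis using c0_pos by auto
qed

lemma U_open: "open {x\<in>\<Omega>. \<bar>\<phi> x\<bar> < \<delta>}"
proof -
  have "continuous_on \<Omega> \<phi>"
  proof (rule continuous_at_imp_continuous_on, rule ballI)
    fix x assume "x \<in> \<Omega>"
    then have "x \<in> closure \<Omega>" using closure_subset by blast
    then show "isCont \<phi> x" by (rule phi_isCont)
  qed
  then have "open (\<phi> -` {-\<delta><..<\<delta>} \<inter> \<Omega>)"
    using \<Omega>_open continuous_on_open_vimage[of \<Omega> \<phi>] open_greaterThanLessThan by blast
  moreover have "\<phi> -` {-\<delta><..<\<delta>} \<inter> \<Omega> = {x\<in>\<Omega>. \<bar>\<phi> x\<bar> < \<delta>}" by auto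
  ultimately show ?thesis by simp
qed

lemma Gamma_U: "\<Gamma> \<subseteq> {x\<in>\<Omega>. \<bar>\<phi> x\<bar> < \<delta>}"
  using Gamma_facts \<delta>_pos by auto

lemma sd_Gamma: "q \<in> \<Gamma> \<Longrightarrow> signed_dist \<Gamma> q = 0"
  by (simp add: signed_dist_def)

lemma hat_Gamma: "q \<in> \<Gamma> \<Longrightarrow> hat_p \<Gamma> q = q"
  by (simp add: hat_p_def sd_Gamma)

lemma p_Gamma: "q \<in> \<Gamma> \<Longrightarrow> p q = q"
proof -
  assume q: "q \<in> \<Gamma>"
  then have "q \<in> {x\<in>\<Omega>. \<bar>\<phi> x\<bar> < \<delta>}" using Gamma_U by auto
  then have "p q \<in> \<Gamma>" "\<gamma> (p q) (\<phi> q) = q" using p_inv by auto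
  moreover have "\<phi> q = 0" using Gamma_facts q by auto
  moreover have "\<gamma> (p q) 0 = p q" using ode \<open>p q \<in> \<Gamma>\<close> by blast
  ultimately show ?thesis by simp
qed

lemma gamma_U: assumes q: "q \<in> \<Gamma>" and s: "s \<in> {-\<delta><..<\<delta>}"
  shows "\<gamma> q s \<in> {x\<in>\<Omega>. \<bar>\<phi> x\<bar> < \<delta>} \<and> p (\<gamma> q s) = q \<and> \<phi> (\<gamma> q s) = s"
proof -
  let ?U = "{x\<in>\<Omega>. \<bar>\<phi> x\<bar> < \<delta>}"
  have img: "(\<lambda>(q, s). \<gamma> q s) ` (\<Gamma> \<times> {-\<delta><..<\<delta>}) = ?U" and inj: "inj_on (\<lambda>(q, s). \<gamma> q s) (\<Gamma> \<times> {-\<delta><..<\<delta>})"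
    using F_bij unfolding bij_betw_def by blast+
  have "(\<lambda>(q, s). \<gamma> q s) (q, s) \<in> ?U" using img q s by (metis imageI mem_Sigma_iff)
  then have xU: "\<gamma> q s \<in> ?U" by simp
  then have pq: "p (\<gamma> q s) \<in> \<Gamma>" "\<gamma> (p (\<gamma> q s)) (\<phi> (\<gamma> q s)) = \<gamma> q s" using p_inv by auto
  have "\<phi> (\<gamma> q s) \<in> {-\<delta><..<\<delta>}" using xU by auto
  then have "(p (\<gamma> q s), \<phi> (\<gamma> q s)) = (q, s)"
    using inj_onD[OF inj, of "(p (\<gamma> q s), \<phi> (\<gamma> q s))" "(q, s)"] pq q s by auto
  then show ?thesis using xU by auto
qed

end


context setting begin

lemma tangent_small:
  assumes q: "q \<in> \<Gamma>" and v: "grad \<phi> q \<bullet> v = 0" and e: "\<epsilon> > 0"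
  shows "\<exists>\<eta>>0. \<forall>t. \<bar>t\<bar> < \<eta> \<longrightarrow> infdist (q + t *\<^sub>R v) \<Gamma> \<le> \<epsilon> * \<bar>t\<bar>"
proof -
  define n where "n = grad \<phi> q"
  have qf: "q \<in> \<Omega>" "q \<in> closure \<Omega>" "\<phi> q = 0" using Gamma_facts q by auto
  have nn: "norm n > 0" using grad_pos[OF qf(2)] c0_pos n_def by auto
  have nv: "n \<bullet> v = 0" using v n_def by simp
  define \<beta> where "\<beta> = \<epsilon> / norm n"
  have \<beta>pos: "\<beta> > 0" using e nn by (simp add: \<beta>_def)
  define L where "L = norm v + \<beta> * norm n"
  have Lpos: "L > 0" using \<beta>pos nn by (simp add: L_def add_nonneg_pos)
  define \<kappa> where "\<kappa> = \<beta> * (norm n)\<^sup>2 / (2 * L)"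
  have \<kappa>pos: "\<kappa> > 0" using \<beta>pos nn Lpos by (simp add: \<kappa>_def)
  have dalt: "\<forall>e>0. \<exists>d>0. \<forall>y. norm (y - q) < d \<longrightarrow> norm (\<phi> y - \<phi> q - n \<bullet> (y - q)) \<le> e * norm (y - q)"
    using phi_deriv[OF qf(2)] unfolding has_derivative_at_alt n_def by (rule conjunct2)
  obtain d1 where d1: "d1 > 0" and D: "\<And>y. norm (y - q) < d1 \<Longrightarrow> \<bar>\<phi> y - n \<bullet> (y - q)\<bar> \<le> \<kappa> * norm (y - q)"
  proof -
    from dalt[rule_format, OF \<kappa>pos] obtain d where "d > 0" "\<forall>y. norm (y - q) < d \<longrightarrow> norm (\<phi> y - \<phi> q - n \<bullet> (y - q)) \<le> \<kappa> * norm (y - q)"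
      by blast
    then show ?thesis using that qf(3) by simp
  qed
  obtain r0 where r0: "r0 > 0" "ball q r0 \<subseteq> \<Omega>" using \<Omega>_open qf(1) open_contains_ball by blast
  define \<eta> where "\<eta> = min d1 r0 / L"
  have \<eta>pos: "\<eta> > 0" using d1 r0 Lpos by (simp add: \<eta>_def)
  have main: "infdist (q + t *\<^sub>R v) \<Gamma> \<le> \<epsilon> * \<bar>t\<bar>" if t: "\<bar>t\<bar> < \<eta>" for t
  proof (cases "t = 0")
    case True
    then show ?thesis using q by simp
  next
    case False
    define a where "a = \<beta> * \<bar>t\<bar>"
    have apos: "a > 0" using False \<beta>pos by (simp add: a_def)
    have tL: "\<bar>t\<bar> * L < min d1 r0" using t Lpos by (simp add: \<eta>_def pos_less_divide_eq)
    have nrm: "norm (t *\<^sub>R v + \<sigma> *\<^sub>R n) < min d1 r0" if "\<bar>\<sigma>\<bar> \<le> a" for \<sigma>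
    proof -
      have "norm (t *\<^sub>R v + \<sigma> *\<^sub>R n) \<le> \<bar>t\<bar> * norm v + \<bar>\<sigma>\<bar> * norm n"
        using norm_triangle_ineq[of "t *\<^sub>R v" "\<sigma> *\<^sub>R n"] by simp
      also have "\<dots> \<le> \<bar>t\<bar> * norm v + a * norm n" using that by (simp add: mult_right_mono)
      also have "\<dots> = \<bar>t\<bar> * L" by (simp add: a_def L_def algebra_simps)
      finally show ?thesis using tL by linarith
    qed
    have inO: "q + t *\<^sub>R v + \<sigma> *\<^sub>R n \<in> \<Omega>" if "\<bar>\<sigma>\<bar> \<le> a" for \<sigma>
    proof -
      have "dist q (q + t *\<^sub>R v + \<sigma> *\<^sub>R n) = norm (t *\<^sub>R v + \<sigma> *\<^sub>R n)"
        by (metis add.assoc add_diff_cancel_left' dist_commute dist_norm)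
      then have "dist q (q + t *\<^sub>R v + \<sigma> *\<^sub>R n) < r0" using nrm[OF that] by simp
      then show ?thesis using r0 by auto
    qed
    have est: "\<bar>\<phi> (q + t *\<^sub>R v + \<sigma> *\<^sub>R n) - \<sigma> * (norm n)\<^sup>2\<bar> \<le> a * (norm n)\<^sup>2 / 2" if s: "\<bar>\<sigma>\<bar> \<le> a" for \<sigma>
    proof -
      let ?y = "q + t *\<^sub>R v + \<sigma> *\<^sub>R n"
      have yq: "?y - q = t *\<^sub>R v + \<sigma> *\<^sub>R n" by simp
      have "norm (?y - q) < d1" using nrm[OF s] yq by simp
      then have "\<bar>\<phi> ?y - n \<bullet> (?y - q)\<bar> \<le> \<kappa> * norm (?y - q)" by (rule D)
      moreover have "n \<bullet> (?y - q) = \<sigma> * (norm n)\<^sup>2"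
        unfolding yq by (simp add: inner_add_right nv power2_norm_eq_inner)
      moreover have "\<kappa> * norm (?y - q) \<le> \<kappa> * (\<bar>t\<bar> * L)"
      proof -
        have "norm (?y - q) \<le> \<bar>t\<bar> * norm v + \<bar>\<sigma>\<bar> * norm n"
          unfolding yq using norm_triangle_ineq[of "t *\<^sub>R v" "\<sigma> *\<^sub>R n"] by simp
        also have "\<dots> \<le> \<bar>t\<bar> * norm v + a * norm n" using s by (simp add: mult_right_mono)
        also have "\<dots> = \<bar>t\<bar> * L" by (simp add: a_def L_def algebra_simps)
        finally show ?thesis using \<kappa>pos by (simp add: mult_left_mono)
      qed
      moreover have "\<kappa> * (\<bar>t\<bar> * L) = a * (norm n)\<^sup>2 / 2"
        using Lpos by (simp add: \<kappa>_def a_def field_simps)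
      ultimately show ?thesis by linarith
    qed
    define h where "h \<sigma> = \<phi> (q + t *\<^sub>R v + \<sigma> *\<^sub>R n)" for \<sigma>
    have pos2: "0 < a * (norm n)\<^sup>2" using apos nn by simp
    have e1: "\<bar>h (-a) - (-a) * (norm n)\<^sup>2\<bar> \<le> a * (norm n)\<^sup>2 / 2"
      using est[of "-a"] apos unfolding h_def by simp
    have e2: "\<bar>h a - a * (norm n)\<^sup>2\<bar> \<le> a * (norm n)\<^sup>2 / 2"
      using est[of a] apos unfolding h_def by simp
    have "h (-a) \<le> 0" using e1 pos2 unfolding abs_le_iff by linarith
    moreover have "0 \<le> h a" using e2 pos2 unfolding abs_le_iff by linarith
    moreover have "continuous_on {-a..a} h"
    proof (rule continuous_at_imp_continuous_on, rule ballI)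
      fix \<sigma> assume "\<sigma> \<in> {-a..a}"
      then have "\<bar>\<sigma>\<bar> \<le> a" by auto
      then have "q + t *\<^sub>R v + \<sigma> *\<^sub>R n \<in> closure \<Omega>" using inO closure_subset by blast
      then have c1: "isCont \<phi> (q + t *\<^sub>R v + \<sigma> *\<^sub>R n)" by (rule phi_isCont)
      have c2: "isCont (\<lambda>\<sigma>. q + t *\<^sub>R v + \<sigma> *\<^sub>R n) \<sigma>" by (intro continuous_intros)
      show "isCont h \<sigma>" unfolding h_def using isCont_o2[OF c2 c1] by simp
    qed
    ultimately obtain \<sigma> where \<sigma>: "-a \<le> \<sigma>" "\<sigma> \<le> a" "h \<sigma> = 0"
      using IVT'[of h "-a" 0 a] apos by auto
    have s: "\<bar>\<sigma>\<bar> \<le> a" using \<sigma> by auto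
    define z where "z = q + t *\<^sub>R v + \<sigma> *\<^sub>R n"
    have "z \<in> \<Gamma>"
      using inO[OF s] closure_subset \<sigma>(3) in_Gamma by (auto simp: z_def h_def)
    then have "infdist (q + t *\<^sub>R v) \<Gamma> \<le> dist (q + t *\<^sub>R v) z" by (rule infdist_le)
    also have "\<dots> = \<bar>\<sigma>\<bar> * norm n" by (simp add: z_def dist_norm)
    also have "\<dots> \<le> a * norm n" using s by (simp add: mult_right_mono)
    also have "\<dots> = \<epsilon> * \<bar>t\<bar>" using nn by (simp add: a_def \<beta>_def)
    finally show ?thesis .
  qed
  show ?thesis using \<eta>pos main by blast
qed

lemma tangent_curve:
  assumes q: "q \<in> \<Gamma>" and v: "grad \<phi> q \<bullet> v = 0"
  shows "\<exists>c. c 0 = q \<and> (\<forall>t. c t \<in> \<Gamma>) \<and> (c has_vector_derivative v) (at 0)"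
proof -
  define c where "c t = (SOME z. z \<in> \<Gamma> \<and> infdist (q + t *\<^sub>R v) \<Gamma> = dist (q + t *\<^sub>R v) z)" for t
  have cp: "c t \<in> \<Gamma> \<and> infdist (q + t *\<^sub>R v) \<Gamma> = dist (q + t *\<^sub>R v) (c t)" for t
  proof -
    obtain z where "z \<in> \<Gamma>" "infdist (q + t *\<^sub>R v) \<Gamma> = dist (q + t *\<^sub>R v) z"
      using infdist_attains_inf[OF Gamma_closed \<Gamma>_ne] by blast
    then show ?thesis unfolding c_def by (rule someI[where P="\<lambda>z. z \<in> \<Gamma> \<and> _ z", OF conjI])
  qed
  have c0: "c 0 = q" using cp[of 0] q by simp
  have "(c has_derivative (\<lambda>t. t *\<^sub>R v)) (at 0)"
    unfolding has_derivative_at_alt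
  proof (intro conjI allI impI)
    show "bounded_linear (\<lambda>t. t *\<^sub>R v)" by (rule bounded_linear_scaleR_left)
    fix e :: real assume e: "e > 0"
    obtain \<eta> where \<eta>: "\<eta> > 0" "\<And>t. \<bar>t\<bar> < \<eta> \<Longrightarrow> infdist (q + t *\<^sub>R v) \<Gamma> \<le> e * \<bar>t\<bar>"
      using tangent_small[OF q v e] by blast
    have "norm (c y - c 0 - (y - 0) *\<^sub>R v) \<le> e * norm (y - 0)" if "norm (y - 0) < \<eta>" for y
    proof -
      have "norm (c y - c 0 - (y - 0) *\<^sub>R v) = dist (q + y *\<^sub>R v) (c y)"
        by (simp add: c0 dist_norm norm_minus_commute algebra_simps)
      also have "\<dots> = infdist (q + y *\<^sub>R v) \<Gamma>" using cp by simp
      also have "\<dots> \<le> e * \<bar>y\<bar>" using \<eta>(2) that by simp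
      finally show ?thesis by simp
    qed
    then show "\<exists>d>0. \<forall>y. norm (y - 0) < d \<longrightarrow> norm (c y - c 0 - (y - 0) *\<^sub>R v) \<le> e * norm (y - 0)"
      using \<eta>(1) by blast
  qed
  then have "(c has_vector_derivative v) (at 0)" by (simp add: has_vector_derivative_def)
  then show ?thesis using c0 cp by blast
qed

lemma tangent_in: "q \<in> \<Gamma> \<Longrightarrow> grad \<phi> q \<bullet> v = 0 \<Longrightarrow> v \<in> tangent_space \<Gamma> q"
proof -
  assume "q \<in> \<Gamma>" "grad \<phi> q \<bullet> v = 0"
  from tangent_curve[OF this] obtain c where "c 0 = q" "\<forall>t. c t \<in> \<Gamma>" "(c has_vector_derivative v) (at 0)"
    by blast
  then show ?thesis unfolding tangent_space_def by (intro CollectI exI[of _ c]) simp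
qed

lemma normal_facts: "q \<in> \<Gamma> \<Longrightarrow> norm (\<nu> q) = 1 \<and> (\<forall>v\<in>tangent_space \<Gamma> q. \<nu> q \<bullet> v = 0)"
proof -
  assume "q \<in> \<Gamma>"
  then have "is_unit_outer_normal \<Gamma> q (\<nu> q)" using normal by blast
  then have H: "norm (\<nu> q) = 1 \<and> (\<forall>v\<in>tangent_space \<Gamma> q. \<nu> q \<bullet> v = 0) \<and> (\<exists>e>0. \<forall>t. 0 < t \<and> t < e \<longrightarrow> q + t *\<^sub>R \<nu> q \<in> outside \<Gamma>)"
    unfolding is_unit_outer_normal_def .
  show ?thesis using conjunct1[OF H] conjunct1[OF conjunct2[OF H]] by (rule conjI)
qed

lemma nu_par:
  assumes q: "q \<in> \<Gamma>"
  shows "\<nu> q = ((\<nu> q \<bullet> grad \<phi> q) / (grad \<phi> q \<bullet> grad \<phi> q)) *\<^sub>R grad \<phi> q"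
proof -
  define n where "n = grad \<phi> q"
  have "q \<in> closure \<Omega>" using Gamma_facts q by blast
  then have "grad \<phi> q \<noteq> 0" using grad_pos by blast
  then have nz: "n \<noteq> 0" unfolding n_def .
  then have nn: "n \<bullet> n \<noteq> 0" by simp
  define l where "l = (\<nu> q \<bullet> n) / (n \<bullet> n)"
  define w where "w = \<nu> q - l *\<^sub>R n"
  have e1: "n \<bullet> w = n \<bullet> \<nu> q - l * (n \<bullet> n)" unfolding w_def by (simp add: inner_diff_right)
  have e2: "l * (n \<bullet> n) = \<nu> q \<bullet> n" unfolding l_def using nn by simp
  have nw0: "n \<bullet> w = 0" using e1 e2 inner_commute[of n "\<nu> q"] by simp
  then have "grad \<phi> q \<bullet> w = 0" unfolding n_def .
  then have "w \<in> tangent_space \<Gamma> q" by (rule tangent_in[OF q])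
  then have nw: "\<nu> q \<bullet> w = 0" using normal_facts[OF q] by blast
  have "w \<bullet> w = \<nu> q \<bullet> w - l * (n \<bullet> w)" unfolding w_def by (simp add: inner_diff_left)
  then have "w \<bullet> w = 0" using nw nw0 by simp
  then have "w = 0" by simp
  then have "\<nu> q = l *\<^sub>R n" unfolding w_def by simp
  then show ?thesis unfolding l_def n_def .
qed

lemma A_grad:
  assumes q: "q \<in> \<Gamma>"
  shows "A q (grad \<phi> q) = grad \<phi> q"
proof -
  define n where "n = grad \<phi> q"
  define l where "l = (\<nu> q \<bullet> n) / (n \<bullet> n)"
  have nu: "\<nu> q = l *\<^sub>R n" using nu_par[OF q] by (simp add: l_def n_def)
  have "norm (\<nu> q) = 1" using normal_facts[OF q] by blast
  then have l0: "l \<noteq> 0" using nu by auto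
  have n: "n = (1 / l) *\<^sub>R \<nu> q" using nu l0 by simp
  have lin: "linear (A q)" using A_linear q by blast
  have "A q n = (1 / l) *\<^sub>R A q (\<nu> q)" unfolding n by (rule linear_scale[OF lin])
  also have "\<dots> = n" using A_nu q n by simp
  finally show ?thesis by (simp add: n_def)
qed

end


lemma linear_expand:
  fixes f :: "'a::euclidean_space \<Rightarrow> 'b::real_vector"
  assumes lin: "linear f"
  shows "f h = (\<Sum>j\<in>Basis. (h \<bullet> j) *\<^sub>R f j)"
proof -
  have "f h = f (\<Sum>j\<in>Basis. (h \<bullet> j) *\<^sub>R j)" by (simp add: euclidean_representation)
  also have "\<dots> = (\<Sum>j\<in>Basis. f ((h \<bullet> j) *\<^sub>R j))" by (rule linear_sum[OF lin])
  also have "\<dots> = (\<Sum>j\<in>Basis. (h \<bullet> j) *\<^sub>R f j)" using linear_scale[OF lin] by simp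
  finally show ?thesis .
qed

context setting begin

lemma A_pd:
  assumes q: "q \<in> \<Gamma>"
  shows "A q h \<bullet> h \<ge> min \<alpha> 1 * (norm h)\<^sup>2"
proof -
  define v where "v = \<nu> q"
  define n where "n = grad \<phi> q"
  define l where "l = (v \<bullet> n) / (n \<bullet> n)"
  have nu: "v = l *\<^sub>R n" using nu_par[OF q] by (simp add: l_def n_def v_def)
  have v1: "norm v = 1" using normal_facts[OF q] v_def by simp
  then have vv: "v \<bullet> v = 1" by (simp add: power2_norm_eq_inner[symmetric])
  have l0: "l \<noteq> 0" using nu v1 by auto
  have nv: "n = (1 / l) *\<^sub>R v" using nu l0 by simp
  define c where "c = h \<bullet> v"
  define \<xi> where "\<xi> = h - c *\<^sub>R v"
  have v\<xi>: "v \<bullet> \<xi> = 0" unfolding \<xi>_def c_def using vv by (simp add: inner_diff_right inner_commute)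
  have "n \<bullet> \<xi> = 0" unfolding nv using v\<xi> by simp
  then have "grad \<phi> q \<bullet> \<xi> = 0" unfolding n_def .
  then have tan: "\<xi> \<in> tangent_space \<Gamma> q" by (rule tangent_in[OF q])
  have ell: "\<xi> \<bullet> A q \<xi> \<ge> \<alpha> * (norm \<xi>)\<^sup>2" using A_ell q tan by blast
  have tn: "\<xi> \<bullet> A q v = 0" using A_tan_nu q tan v_def by blast
  have lin: "linear (A q)" using A_linear q by blast
  have sy: "\<forall>i\<in>Basis. \<forall>j\<in>Basis. i \<bullet> A q j = j \<bullet> A q i" using A_sym q by blast
  have Av: "A q v = v" using A_nu q v_def by blast
  have hdec: "h = \<xi> + c *\<^sub>R v" by (simp add: \<xi>_def)
  have Ah: "A q h = A q \<xi> + c *\<^sub>R v"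
    by (subst hdec) (simp add: linear_add[OF lin] linear_scale[OF lin] Av)
  have s1: "A q \<xi> \<bullet> v = 0"
    using sym_linear[OF lin sy, of v \<xi>] tn by (simp add: inner_commute)
  have "A q h \<bullet> h = (A q \<xi> + c *\<^sub>R v) \<bullet> (\<xi> + c *\<^sub>R v)" using Ah hdec by simp
  also have "\<dots> = A q \<xi> \<bullet> \<xi> + c * (A q \<xi> \<bullet> v) + c * (v \<bullet> \<xi>) + c * c * (v \<bullet> v)"
    by (simp add: inner_add_left inner_add_right algebra_simps)
  also have "\<dots> = \<xi> \<bullet> A q \<xi> + c\<^sup>2" using s1 v\<xi> vv by (simp add: inner_commute power2_eq_square)
  finally have e: "A q h \<bullet> h = \<xi> \<bullet> A q \<xi> + c\<^sup>2" .
  have nh: "(norm h)\<^sup>2 = (norm \<xi>)\<^sup>2 + c\<^sup>2"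
  proof -
    have "(norm h)\<^sup>2 = (\<xi> + c *\<^sub>R v) \<bullet> (\<xi> + c *\<^sub>R v)" using hdec by (simp add: power2_norm_eq_inner)
    also have "\<dots> = \<xi> \<bullet> \<xi> + c * (\<xi> \<bullet> v) + c * (v \<bullet> \<xi>) + c * c * (v \<bullet> v)"
      by (simp add: inner_add_left inner_add_right algebra_simps)
    also have "\<dots> = \<xi> \<bullet> \<xi> + c\<^sup>2" using v\<xi> vv inner_commute[of \<xi> v] by (simp add: power2_eq_square)
    also have "\<dots> = (norm \<xi>)\<^sup>2 + c\<^sup>2" by (simp add: power2_norm_eq_inner)
    finally show ?thesis .
  qed
  have m1: "min \<alpha> 1 * (norm \<xi>)\<^sup>2 \<le> \<alpha> * (norm \<xi>)\<^sup>2" by (simp add: mult_right_mono)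
  have m2: "min \<alpha> 1 * c\<^sup>2 \<le> c\<^sup>2" using mult_right_mono[of "min \<alpha> 1" 1 "c\<^sup>2"] by simp
  have "min \<alpha> 1 * (norm h)\<^sup>2 = min \<alpha> 1 * (norm \<xi>)\<^sup>2 + min \<alpha> 1 * c\<^sup>2" using nh by (simp add: algebra_simps)
  also have "\<dots> \<le> \<xi> \<bullet> A q \<xi> + c\<^sup>2" using m1 m2 ell by linarith
  finally show ?thesis using e by simp
qed

lemma A_bound: "\<exists>B>0. \<forall>q\<in>\<Gamma>. \<forall>h. norm (A q h) \<le> B * norm h"
proof -
  have ce: "continuous_on \<Gamma> (\<lambda>x. i \<bullet> A x j)" if "i \<in> Basis" "j \<in> Basis" for i j
  proof -
    have "Ck_on_surface 2 \<Gamma> (\<lambda>x. i \<bullet> A x j)" using A_C2 that by simp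
    then obtain W g where W: "open W" "\<Gamma> \<subseteq> W" "Ck_on 2 W g" "\<forall>x\<in>\<Gamma>. g x = i \<bullet> A x j"
      unfolding Ck_on_surface_def by blast
    have "continuous_on W g" using Ck_on_le[OF W(3), of 0] by simp
    then have cg: "continuous_on \<Gamma> g" using W(2) continuous_on_subset by blast
    have "continuous_on \<Gamma> g = continuous_on \<Gamma> (\<lambda>x. i \<bullet> A x j)"
      using W(4) by (intro continuous_on_cong) auto
    then show ?thesis using cg by simp
  qed
  define E where "E x = (\<Sum>j\<in>Basis. \<Sum>i\<in>Basis. \<bar>i \<bullet> A x j\<bar>)" for x
  have "continuous_on \<Gamma> E" unfolding E_def
    by (intro continuous_on_sum continuous_on_rabs ce) auto
  then obtain E0 where E0: "\<And>y. y \<in> \<Gamma> \<Longrightarrow> norm (E y) \<le> E0"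
    using compact_bound[of \<Gamma> E] \<Gamma>_compact by blast
  define B where "B = max E0 1"
  have "norm (A q h) \<le> B * norm h" if q: "q \<in> \<Gamma>" for q h
  proof -
    have lin: "linear (A q)" using A_linear q by blast
    have "A q h = (\<Sum>j\<in>Basis. (h \<bullet> j) *\<^sub>R A q j)" by (rule linear_expand[OF lin])
    then have "norm (A q h) = norm (\<Sum>j\<in>Basis. (h \<bullet> j) *\<^sub>R A q j)" by simp
    also have "\<dots> \<le> (\<Sum>j\<in>Basis. norm ((h \<bullet> j) *\<^sub>R A q j))" by (rule norm_sum)
    also have "\<dots> \<le> (\<Sum>j\<in>Basis. norm h * (\<Sum>i\<in>Basis. \<bar>i \<bullet> A q j\<bar>))"
    proof (rule sum_mono)
      fix j :: 'a assume j: "j \<in> Basis"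
      have "norm (A q j) \<le> (\<Sum>i\<in>Basis. \<bar>A q j \<bullet> i\<bar>)" by (rule norm_le_l1)
      also have "\<dots> = (\<Sum>i\<in>Basis. \<bar>i \<bullet> A q j\<bar>)" by (simp add: inner_commute)
      finally have "norm (A q j) \<le> (\<Sum>i\<in>Basis. \<bar>i \<bullet> A q j\<bar>)" .
      then show "norm ((h \<bullet> j) *\<^sub>R A q j) \<le> norm h * (\<Sum>i\<in>Basis. \<bar>i \<bullet> A q j\<bar>)"
        using Basis_le_norm[OF j, of h] by (simp add: mult_mono)
    qed
    also have "\<dots> = norm h * E q" by (simp add: E_def sum_distrib_left)
    also have "\<dots> \<le> norm h * B"
    proof -
      have "E q \<le> E0" using E0[OF q] by simp
      then show ?thesis by (simp add: B_def mult_left_mono)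
    qed
    finally show ?thesis by (simp add: mult.commute)
  qed
  moreover have "B > 0" by (simp add: B_def)
  ultimately show ?thesis by blast
qed

end


context setting begin

lemma flow_bound: "\<exists>V>0. \<forall>q\<in>\<Gamma>. \<forall>y\<in>closure \<Omega>. norm (flow_field A \<phi> q y) \<le> V"
proof -
  obtain B where B: "B > 0" "\<And>q h. q \<in> \<Gamma> \<Longrightarrow> norm (A q h) \<le> B * norm h"
    using A_bound by auto
  define l where "l = min \<alpha> 1"
  have lpos: "l > 0" using \<alpha>_pos by (simp add: l_def)
  define V where "V = B / (l * c0)"
  have Vpos: "V > 0" using B(1) lpos c0_pos by (simp add: V_def)
  have "norm (flow_field A \<phi> q y) \<le> V" if q: "q \<in> \<Gamma>" and y: "y \<in> closure \<Omega>" for q y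
  proof -
    define N where "N = grad \<phi> y"
    have Nc: "c0 \<le> norm N" using grad_pos[OF y] by (simp add: N_def)
    then have Npos: "norm N > 0" using c0_pos by linarith
    define den where "den = A q N \<bullet> N"
    have dl: "l * (norm N)\<^sup>2 \<le> den" using A_pd[OF q, of N] by (simp add: den_def l_def)
    have lN: "l * (norm N)\<^sup>2 > 0" using lpos Npos by simp
    then have dpos: "den > 0" using dl by linarith
    have "norm (flow_field A \<phi> q y) = norm (A q N) / den"
      using dpos by (simp add: flow_field_def N_def den_def)
    also have "\<dots> \<le> (B * norm N) / (l * (norm N)\<^sup>2)"
      using B(2)[OF q, of N] B(1) dl lN by (intro frac_le) auto
    also have "\<dots> = B / (l * norm N)" using Npos by (simp add: power2_eq_square)
    also have "\<dots> \<le> B / (l * c0)"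
      using B(1) lpos c0_pos Nc Npos by (intro divide_left_mono mult_left_mono mult_pos_pos) auto
    finally show ?thesis by (simp add: V_def)
  qed
  then show ?thesis using Vpos by blast
qed

lemma dist_bound: "\<exists>V>0. \<forall>x\<in>{x\<in>\<Omega>. \<bar>\<phi> x\<bar> < \<delta>}. norm (x - p x) \<le> V * \<bar>\<phi> x\<bar>"
proof -
  obtain V where V: "V > 0" "\<And>q y. q \<in> \<Gamma> \<Longrightarrow> y \<in> closure \<Omega> \<Longrightarrow> norm (flow_field A \<phi> q y) \<le> V"
    using flow_bound by auto
  have "norm (x - p x) \<le> V * \<bar>\<phi> x\<bar>" if x: "x \<in> {x\<in>\<Omega>. \<bar>\<phi> x\<bar> < \<delta>}" for x
  proof -
    define q where "q = p x"
    define s where "s = \<phi> x"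
    have q: "q \<in> \<Gamma>" and gx: "\<gamma> q s = x" using p_inv x by (auto simp: q_def s_def)
    have sd: "\<bar>s\<bar> < \<delta>" using x by (simp add: s_def)
    have oq: "\<gamma> q 0 = q \<and> (\<forall>t\<in>{-\<delta><..<\<delta>}. \<gamma> q t \<in> closure \<Omega> \<and>
                 (\<gamma> q has_vector_derivative flow_field A \<phi> q (\<gamma> q t)) (at t))"
      using ode q by blast
    have segI: "\<bar>t\<bar> < \<delta>" if "t \<in> closed_segment 0 s" for t
    proof -
      have "\<bar>t\<bar> \<le> \<bar>s\<bar>" using that by (auto simp: closed_segment_eq_real_ivl split: if_splits)
      then show ?thesis using sd by linarith
    qed
    have "norm (\<gamma> q s - \<gamma> q 0) \<le> V * norm (s - 0)"
    proof (rule differentiable_bound[where S="closed_segment 0 s" and f'="\<lambda>t u. u *\<^sub>R flow_field A \<phi> q (\<gamma> q t)"])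
      show "convex (closed_segment 0 s)" by simp
      fix t assume t: "t \<in> closed_segment 0 s"
      then have ti: "t \<in> {-\<delta><..<\<delta>}" using segI[OF t] by auto
      have "(\<gamma> q has_vector_derivative flow_field A \<phi> q (\<gamma> q t)) (at t)" using oq ti by blast
      then show "(\<gamma> q has_derivative (\<lambda>u. u *\<^sub>R flow_field A \<phi> q (\<gamma> q t))) (at t within closed_segment 0 s)"
        unfolding has_vector_derivative_def by (rule has_derivative_at_withinI)
      have inO: "\<gamma> q t \<in> closure \<Omega>" using oq ti by blast
      show "onorm (\<lambda>u. u *\<^sub>R flow_field A \<phi> q (\<gamma> q t)) \<le> V"
      proof (rule onorm_le)
        fix u :: real
        have "norm (u *\<^sub>R flow_field A \<phi> q (\<gamma> q t)) = \<bar>u\<bar> * norm (flow_field A \<phi> q (\<gamma> q t))" by simp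
        also have "\<dots> \<le> \<bar>u\<bar> * V" using V(2)[OF q inO] by (simp add: mult_left_mono)
        finally show "norm (u *\<^sub>R flow_field A \<phi> q (\<gamma> q t)) \<le> V * norm u" by (simp add: mult.commute)
      qed
    qed auto
    then show ?thesis using gx oq by (simp add: q_def s_def)
  qed
  then show ?thesis using V(1) by blast
qed

end


lemma Ck2_diffble: "Ck_on 2 S f \<Longrightarrow> open S \<Longrightarrow> x \<in> S \<Longrightarrow> f differentiable (at x)"
  by (simp add: numeral_2_eq_2 differentiable_on_eq_differentiable_at)

context setting begin

lemma hat_C2: "Ck_on 2 \<Omega> (hat_p \<Gamma>)"
proof -
  define d where "d = signed_dist \<Gamma>"
  have d3: "Ck_on (Suc 2) \<Omega> d" unfolding d_def by (rule smooth_on_Ck[OF d_smooth])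
  then have "d differentiable_on \<Omega> \<and> (\<forall>b\<in>Basis. Ck_on 2 \<Omega> (\<lambda>x. frechet_derivative d (at x) b))"
    unfolding Ck_on.simps(2) .
  then have pd: "\<And>b. b \<in> Basis \<Longrightarrow> Ck_on 2 \<Omega> (\<lambda>x. frechet_derivative d (at x) b)" by blast
  have d2: "Ck_on 2 \<Omega> d" using Ck_on_le[OF d3, of 2] by simp
  have gd: "Ck_on 2 \<Omega> (\<lambda>x. \<Sum>b\<in>Basis. frechet_derivative d (at x) b *\<^sub>R b)"
    by (intro Ck_on_sum[OF \<Omega>_open] Ck_on_scaleR[OF \<Omega>_open] pd Ck_on_const) auto
  have "Ck_on 2 \<Omega> (\<lambda>x. x - d x *\<^sub>R (\<Sum>b\<in>Basis. frechet_derivative d (at x) b *\<^sub>R b))"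
    by (intro Ck_on_diff[OF \<Omega>_open] Ck_on_id[OF \<Omega>_open] Ck_on_scaleR[OF \<Omega>_open] d2 gd)
  moreover have "hat_p \<Gamma> = (\<lambda>x. x - d x *\<^sub>R (\<Sum>b\<in>Basis. frechet_derivative d (at x) b *\<^sub>R b))"
    by (simp add: fun_eq_iff hat_p_def grad_def d_def)
  ultimately show ?thesis by simp
qed

lemma g_C2: "Ck_on 2 {x\<in>\<Omega>. \<bar>\<phi> x\<bar> < \<delta>} (\<lambda>x. p x - hat_p \<Gamma> x)"
proof -
  have "Ck_on 2 {x\<in>\<Omega>. \<bar>\<phi> x\<bar> < \<delta>} (hat_p \<Gamma>)" using Ck_on_subset[OF hat_C2] by auto
  then show ?thesis using p_C2 by (intro Ck_on_diff[OF U_open]) auto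
qed

lemma p_diff: "q \<in> \<Gamma> \<Longrightarrow> p differentiable (at q)"
  using Ck2_diffble[OF p_C2 U_open] Gamma_U by blast

lemma hat_diff: "q \<in> \<Gamma> \<Longrightarrow> hat_p \<Gamma> differentiable (at q)"
  using Ck2_diffble[OF hat_C2 \<Omega>_open] Gamma_facts by blast

lemma Dp_n:
  assumes q: "q \<in> \<Gamma>"
  shows "frechet_derivative p (at q) (grad \<phi> q) = 0"
proof -
  define n where "n = grad \<phi> q"
  define Dp where "Dp = frechet_derivative p (at q)"
  have nn: "n \<bullet> n \<noteq> 0" using grad_pos Gamma_facts q n_def by simp
  define w where "w = flow_field A \<phi> q q"
  have w: "w = (1 / (n \<bullet> n)) *\<^sub>R n" using A_grad[OF q] by (simp add: w_def flow_field_def n_def)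
  have oq: "\<gamma> q 0 = q \<and> (\<forall>t\<in>{-\<delta><..<\<delta>}. \<gamma> q t \<in> closure \<Omega> \<and>
                 (\<gamma> q has_vector_derivative flow_field A \<phi> q (\<gamma> q t)) (at t))"
    using ode q by blast
  have z: "(0::real) \<in> {-\<delta><..<\<delta>}" using \<delta>_pos by simp
  have "(\<gamma> q has_vector_derivative flow_field A \<phi> q (\<gamma> q 0)) (at 0)" using oq z by blast
  then have gd: "(\<gamma> q has_derivative (\<lambda>t. t *\<^sub>R w)) (at 0)"
    using oq by (simp add: has_vector_derivative_def w_def)
  have pd: "(p has_derivative Dp) (at (\<gamma> q 0))"
    using p_diff[OF q] oq by (simp add: Dp_def frechet_derivative_works)
  have c1: "((p \<circ> \<gamma> q) has_derivative (Dp \<circ> (\<lambda>t. t *\<^sub>R w))) (at 0)"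
    by (rule diff_chain_at[OF gd pd])
  have c2: "((p \<circ> \<gamma> q) has_derivative (\<lambda>_. 0)) (at 0)"
  proof (rule has_derivative_transform_within_open[OF has_derivative_const[of q] open_greaterThanLessThan z])
    fix t assume "t \<in> {-\<delta><..<\<delta>}"
    then show "q = (p \<circ> \<gamma> q) t" using gamma_U[OF q] by simp
  qed
  have "Dp \<circ> (\<lambda>t. t *\<^sub>R w) = (\<lambda>_. 0)" using has_derivative_unique[OF c1 c2] .
  from fun_cong[OF this, of 1] have Dw: "Dp w = 0" by simp
  have lin: "linear Dp" unfolding Dp_def by (rule linear_frechet_derivative[OF p_diff[OF q]])
  have "n = (n \<bullet> n) *\<^sub>R w" using w nn by simp
  then have "Dp n = Dp ((n \<bullet> n) *\<^sub>R w)" by (rule arg_cong)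
  also have "\<dots> = (n \<bullet> n) *\<^sub>R Dp w" by (rule linear_scale[OF lin])
  finally have "Dp n = (n \<bullet> n) *\<^sub>R Dp w" .
  then show ?thesis using Dw by (simp add: Dp_def n_def)
qed

end


context setting begin

lemma Dh_n:
  assumes q: "q \<in> \<Gamma>"
  shows "frechet_derivative (hat_p \<Gamma>) (at q) (grad \<phi> q) = 0"
proof -
  define n where "n = grad \<phi> q"
  define H where "H = hat_p \<Gamma>"
  define DH where "DH = frechet_derivative H (at q)"
  have qf: "q \<in> \<Omega>" "q \<in> closure \<Omega>" "\<phi> q = 0" using Gamma_facts q by auto
  have nn: "norm n > 0" using grad_pos[OF qf(2)] c0_pos n_def by auto
  have Hq: "H q = q" using hat_Gamma[OF q] by (simp add: H_def)
  have Hd: "(H has_derivative DH) (at q)"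
    using hat_diff[OF q] by (simp add: H_def DH_def frechet_derivative_works)
  have lin: "linear DH" unfolding DH_def H_def by (rule linear_frechet_derivative[OF hat_diff[OF q]])
  have dalt: "\<forall>e>0. \<exists>d>0. \<forall>y. norm (y - q) < d \<longrightarrow> norm (\<phi> y - \<phi> q - n \<bullet> (y - q)) \<le> e * norm (y - q)"
    using phi_deriv[OF qf(2)] unfolding has_derivative_at_alt n_def by (rule conjunct2)
  have halt: "\<forall>e>0. \<exists>d>0. \<forall>y. norm (y - q) < d \<longrightarrow> norm (H y - H q - DH (y - q)) \<le> e * norm (y - q)"
    using Hd unfolding has_derivative_at_alt by (rule conjunct2)
  have bound: "norm (DH n) \<le> 0 + \<epsilon>" if e: "\<epsilon> > 0" for \<epsilon>
  proof -
    define \<kappa> where "\<kappa> = \<epsilon> / 4"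
    have \<kappa>pos: "\<kappa> > 0" using e by (simp add: \<kappa>_def)
    define e2 where "e2 = \<epsilon> / (2 * norm n)"
    have e2pos: "e2 > 0" using e nn by (simp add: e2_def)
    from dalt[rule_format, OF \<kappa>pos] obtain d1 where d1: "d1 > 0"
      "\<forall>y. norm (y - q) < d1 \<longrightarrow> norm (\<phi> y - \<phi> q - n \<bullet> (y - q)) \<le> \<kappa> * norm (y - q)" by blast
    from halt[rule_format, OF e2pos] obtain d2 where d2: "d2 > 0"
      "\<forall>y. norm (y - q) < d2 \<longrightarrow> norm (H y - H q - DH (y - q)) \<le> e2 * norm (y - q)" by blast
    obtain r0 where r0: "r0 > 0" "ball q r0 \<subseteq> \<Omega>" using \<Omega>_open qf(1) open_contains_ball by blast
    define m where "m = min r0 (min (d1 / 2) d2)"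
    have mpos: "m > 0" using r0 d1 d2 by (simp add: m_def)
    have mle: "m \<le> r0" "m \<le> d1 / 2" "m \<le> d2" by (simp_all add: m_def)
    define t where "t = m / (2 * norm n)"
    have tpos: "t > 0" using mpos nn by (simp add: t_def)
    define y where "y = q + t *\<^sub>R n"
    have nyq: "norm (y - q) = m / 2" using nn tpos mpos by (simp add: y_def t_def)
    have yO: "y \<in> \<Omega>"
    proof -
      have "dist q y = m / 2" using nyq by (simp add: dist_norm norm_minus_commute)
      then have "dist q y < r0" using mle mpos by linarith
      then show ?thesis using r0 by auto
    qed
    define z where "z = H y"
    have zc: "z \<in> \<Gamma> \<and> dist y z = infdist y \<Gamma>" using closest yO by (simp add: z_def H_def)
    have dz: "dist y z \<le> dist y q" using zc infdist_le[OF q, of y] by simp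
    have nzq: "norm (z - q) \<le> m"
    proof -
      have "norm (z - q) \<le> dist z y + dist y q" using dist_triangle[of z q y] by (simp add: dist_norm)
      also have "\<dots> \<le> 2 * norm (y - q)" using dz norm_minus_commute[of q y] by (simp add: dist_commute dist_norm)
      finally show ?thesis using nyq by simp
    qed
    have zG: "\<phi> z = 0" using Gamma_facts zc by blast
    have "norm (z - q) < d1" using nzq mpos mle by linarith
    then have nz: "\<bar>n \<bullet> (z - q)\<bar> \<le> \<kappa> * norm (z - q)" using d1(2) zG qf(3) by auto
    have ca: "(norm (z - q))\<^sup>2 \<le> 2 * ((y - q) \<bullet> (z - q))" by (rule closest_alg[OF dz])
    also have "\<dots> = 2 * t * (n \<bullet> (z - q))" by (simp add: y_def)
    also have "\<dots> \<le> 2 * t * (\<kappa> * norm (z - q))" using nz tpos by (simp add: abs_le_iff)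
    finally have sq: "(norm (z - q))\<^sup>2 \<le> 2 * t * \<kappa> * norm (z - q)" by simp
    have zq: "norm (z - q) \<le> 2 * t * \<kappa>"
    proof (cases "norm (z - q) = 0")
      case True then show ?thesis using tpos \<kappa>pos by simp
    next
      case False
      then have "norm (z - q) > 0" by simp
      then show ?thesis using sq by (simp add: power2_eq_square)
    qed
    have "norm (y - q) < d2" using nyq mpos mle by linarith
    then have "norm (H y - H q - DH (y - q)) \<le> e2 * norm (y - q)" using d2(2) by blast
    then have hb: "norm (z - q - DH (t *\<^sub>R n)) \<le> e2 * (t * norm n)"
      using Hq tpos by (simp add: z_def y_def)
    have Dt: "DH (t *\<^sub>R n) = t *\<^sub>R DH n" by (rule linear_scale[OF lin])
    have "t * norm (DH n) = norm (DH (t *\<^sub>R n))" using Dt tpos by simp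
    also have "\<dots> \<le> norm (z - q) + norm (z - q - DH (t *\<^sub>R n))"
      using norm_triangle_ineq4[of "z - q" "z - q - DH (t *\<^sub>R n)"] by simp
    also have "\<dots> \<le> 2 * t * \<kappa> + e2 * (t * norm n)" using zq hb by linarith
    also have "\<dots> = t * \<epsilon>" using nn by (simp add: \<kappa>_def e2_def field_simps)
    finally have "t * norm (DH n) \<le> t * \<epsilon>" .
    then show ?thesis using tpos by simp
  qed
  have "norm (DH n) \<le> 0" by (rule field_le_epsilon) (rule bound)
  then show ?thesis by (simp add: DH_def H_def n_def)
qed


lemma Dg_zero:
  assumes q: "q \<in> \<Gamma>"
  shows "frechet_derivative (\<lambda>x. p x - hat_p \<Gamma> x) (at q) h = 0"
proof -
  define G where "G = (\<lambda>x. p x - hat_p \<Gamma> x)"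
  define DG where "DG = (\<lambda>h. frechet_derivative p (at q) h - frechet_derivative (hat_p \<Gamma>) (at q) h)"
  define n where "n = grad \<phi> q"
  have nn: "n \<bullet> n \<noteq> 0" using grad_pos Gamma_facts q n_def by simp
  have pd: "(p has_derivative frechet_derivative p (at q)) (at q)"
    using p_diff[OF q] frechet_derivative_works by blast
  have hd: "(hat_p \<Gamma> has_derivative frechet_derivative (hat_p \<Gamma>) (at q)) (at q)"
    using hat_diff[OF q] frechet_derivative_works by blast
  have Gd: "(G has_derivative DG) (at q)" unfolding G_def DG_def by (rule has_derivative_diff[OF pd hd])
  have fdG: "frechet_derivative G (at q) = DG" using frechet_derivative_at[OF Gd] by simp
  have linDG: "linear DG" using has_derivative_linear[OF Gd] .
  have tang: "DG v = 0" if v: "n \<bullet> v = 0" for v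
  proof -
    have "grad \<phi> q \<bullet> v = 0" using v n_def by simp
    from tangent_curve[OF q this] obtain c where c: "c 0 = q" "\<forall>t. c t \<in> \<Gamma>" "(c has_vector_derivative v) (at 0)"
      by blast
    have cd: "(c has_derivative (\<lambda>t. t *\<^sub>R v)) (at 0)" using c(3) by (simp add: has_vector_derivative_def)
    have Gd': "(G has_derivative DG) (at (c 0))" using Gd c(1) by simp
    have c1: "((G \<circ> c) has_derivative (DG \<circ> (\<lambda>t. t *\<^sub>R v))) (at 0)" by (rule diff_chain_at[OF cd Gd'])
    have Gc: "G \<circ> c = (\<lambda>_. 0)"
    proof
      fix t
      have "c t \<in> \<Gamma>" using c(2) by blast
      then show "(G \<circ> c) t = 0" by (simp add: G_def p_Gamma hat_Gamma)
    qed
    have c2: "((G \<circ> c) has_derivative (\<lambda>_. 0)) (at 0)" unfolding Gc by (rule has_derivative_const)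
    have "DG \<circ> (\<lambda>t. t *\<^sub>R v) = (\<lambda>_. 0)" using has_derivative_unique[OF c1 c2] .
    from fun_cong[OF this, of 1] show ?thesis by simp
  qed
  have DGn: "DG n = 0" using Dp_n[OF q] Dh_n[OF q] by (simp add: DG_def n_def)
  define a where "a = (h \<bullet> n) / (n \<bullet> n)"
  define \<xi> where "\<xi> = h - a *\<^sub>R n"
  have "n \<bullet> \<xi> = n \<bullet> h - a * (n \<bullet> n)" by (simp add: \<xi>_def inner_diff_right)
  also have "a * (n \<bullet> n) = n \<bullet> h" using nn by (simp add: a_def inner_commute)
  finally have n\<xi>: "n \<bullet> \<xi> = 0" by simp
  have "h = \<xi> + a *\<^sub>R n" by (simp add: \<xi>_def)
  then have "DG h = DG (\<xi> + a *\<^sub>R n)" by (rule arg_cong)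
  also have "\<dots> = DG \<xi> + a *\<^sub>R DG n" by (simp add: linear_add[OF linDG] linear_scale[OF linDG])
  also have "\<dots> = 0" using tang[OF n\<xi>] DGn by simp
  finally show ?thesis using fdG by (simp add: G_def)
qed

end


context setting begin

lemma thickening: "\<exists>r>0. \<forall>a\<in>\<Gamma>. cball a r \<subseteq> {x\<in>\<Omega>. \<bar>\<phi> x\<bar> < \<delta>}"
proof (cases "- {x\<in>\<Omega>. \<bar>\<phi> x\<bar> < \<delta>} = {}")
  case True
  then show ?thesis by (intro exI[of _ 1]) auto
next
  case False
  let ?U = "{x\<in>\<Omega>. \<bar>\<phi> x\<bar> < \<delta>}"
  have cl: "closed (- ?U)" using U_open by (simp add: closed_Compl)
  obtain a b where ab: "a \<in> \<Gamma>" "b \<in> - ?U" "dist a b = setdist \<Gamma> (- ?U)"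
    using setdist_compact_closed[OF \<Gamma>_compact cl \<Gamma>_ne False] by blast
  have "a \<noteq> b" using ab Gamma_U by auto
  then have "dist a b > 0" by simp
  then have sp: "setdist \<Gamma> (- ?U) > 0" using ab(3) by linarith
  define r where "r = setdist \<Gamma> (- ?U) / 2"
  have cb: "cball a' r \<subseteq> ?U" if a': "a' \<in> \<Gamma>" for a'
  proof
    fix y assume y: "y \<in> cball a' r"
    show "y \<in> ?U"
    proof (rule ccontr)
      assume "y \<notin> ?U"
      then have "y \<in> - ?U" by simp
      then have "setdist \<Gamma> (- ?U) \<le> dist a' y" by (rule setdist_le_dist[OF a'])
      moreover have "dist a' y \<le> r" using y by simp
      ultimately show False using sp unfolding r_def by linarith
    qed
  qed
  have "r > 0" using sp by (simp add: r_def)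
  then show ?thesis using cb by blast
qed

lemma main_result: "\<exists>C. \<forall>x\<in>{x\<in>\<Omega>. \<bar>\<phi> x\<bar> < \<delta>}. norm (p x - hat_p \<Gamma> x) \<le> C * (\<phi> x)\<^sup>2"
proof -
  define U where "U = {x\<in>\<Omega>. \<bar>\<phi> x\<bar> < \<delta>}"
  define G where "G = (\<lambda>x. p x - hat_p \<Gamma> x)"
  obtain r where r: "r > 0" "\<And>a. a \<in> \<Gamma> \<Longrightarrow> cball a r \<subseteq> U"
    using thickening unfolding U_def by blast
  define K where "K = {a + b | a b. a \<in> \<Gamma> \<and> b \<in> cball 0 r}"
  have Kc: "compact K" unfolding K_def by (rule compact_sums[OF \<Gamma>_compact compact_cball])
  have ballK: "cball a r \<subseteq> K" if a: "a \<in> \<Gamma>" for a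
  proof
    fix y assume "y \<in> cball a r"
    then have "y - a \<in> cball 0 r" by (simp add: dist_norm norm_minus_commute)
    then show "y \<in> K" unfolding K_def using a by (intro CollectI exI[of _ a] exI[of _ "y - a"]) simp
  qed
  have KU: "K \<subseteq> U"
  proof
    fix y assume "y \<in> K"
    then obtain a b where ab: "y = a + b" "a \<in> \<Gamma>" "b \<in> cball 0 r" unfolding K_def by blast
    then have "y \<in> cball a r" by (simp add: dist_norm)
    then show "y \<in> U" using r(2)[OF ab(2)] by blast
  qed
  have GC2: "Ck_on 2 U G" using g_C2 by (simp add: U_def G_def)
  have Uo: "open U" using U_open by (simp add: U_def)
  obtain M where M: "\<And>q y. closed_segment q y \<subseteq> K \<Longrightarrow>
            norm (G y - G q - frechet_derivative G (at q) (y - q)) \<le> M * (norm (y - q))\<^sup>2"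
    using Taylor2[OF Uo GC2 Kc KU] by blast
  obtain V where V: "V > 0" "\<And>x. x \<in> U \<Longrightarrow> norm (x - p x) \<le> V * \<bar>\<phi> x\<bar>"
    using dist_bound unfolding U_def by blast
  obtain R where R: "\<And>a. a \<in> \<Gamma> \<Longrightarrow> norm a \<le> R"
    using compact_imp_bounded[OF \<Gamma>_compact] by (auto simp: bounded_iff)
  define R' where "R' = max R 0"
  have R'nn: "R' \<ge> 0" by (simp add: R'_def)
  have Gb: "norm (G x) \<le> 2 * R'" if x: "x \<in> U" for x
  proof -
    have "p x \<in> \<Gamma>" using p_inv x by (simp add: U_def)
    moreover have "hat_p \<Gamma> x \<in> \<Gamma>" using closest x by (simp add: U_def)
    ultimately have "norm (p x) \<le> R'" "norm (hat_p \<Gamma> x) \<le> R'" using R by (auto simp: R'_def intro: le_max_iff_disj[THEN iffD2])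
    then show ?thesis using norm_triangle_ineq4[of "p x" "hat_p \<Gamma> x"] by (simp add: G_def)
  qed
  define M' where "M' = max M 0"
  define C where "C = M' * V\<^sup>2 + 2 * R' * V\<^sup>2 / r\<^sup>2"
  have "norm (G x) \<le> C * (\<phi> x)\<^sup>2" if x: "x \<in> U" for x
  proof -
    define q where "q = p x"
    define s where "s = \<phi> x"
    have q: "q \<in> \<Gamma>" using p_inv x by (simp add: U_def q_def)
    have nxq: "norm (x - q) \<le> V * \<bar>s\<bar>" using V(2)[OF x] by (simp add: q_def s_def)
    have t1: "0 \<le> M' * V\<^sup>2 * s\<^sup>2" by (simp add: M'_def)
    have t2: "0 \<le> 2 * R' * V\<^sup>2 / r\<^sup>2 * s\<^sup>2" using R'nn by simp
    have Cs: "C * s\<^sup>2 = M' * V\<^sup>2 * s\<^sup>2 + 2 * R' * V\<^sup>2 / r\<^sup>2 * s\<^sup>2" by (simp add: C_def algebra_simps)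
    show ?thesis
    proof (cases "V * \<bar>s\<bar> < r")
      case True
      then have "norm (x - q) < r" using nxq by linarith
      then have xb: "x \<in> cball q r" by (simp add: dist_norm norm_minus_commute)
      have "closed_segment q x \<subseteq> cball q r"
        using xb r(1) by (intro closed_segment_subset) auto
      then have seg: "closed_segment q x \<subseteq> K" using ballK[OF q] by blast
      have Gq: "G q = 0" using q by (simp add: G_def p_Gamma hat_Gamma)
      have DG: "frechet_derivative G (at q) (x - q) = 0" using Dg_zero[OF q] by (simp add: G_def)
      have "norm (G x) \<le> M * (norm (x - q))\<^sup>2" using M[OF seg] Gq DG by simp
      also have "\<dots> \<le> M' * (norm (x - q))\<^sup>2" by (simp add: M'_def mult_right_mono)
      also have "\<dots> \<le> M' * (V * \<bar>s\<bar>)\<^sup>2"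
        using nxq by (intro mult_left_mono power_mono) (auto simp: M'_def)
      also have "\<dots> = M' * V\<^sup>2 * s\<^sup>2" by (simp add: power_mult_distrib)
      also have "\<dots> \<le> C * s\<^sup>2" using Cs t2 by linarith
      finally show ?thesis by (simp add: s_def)
    next
      case False
      then have "r \<le> V * \<bar>s\<bar>" by simp
      then have "r\<^sup>2 \<le> (V * \<bar>s\<bar>)\<^sup>2" using r(1) by (intro power_mono) auto
      then have "1 \<le> V\<^sup>2 * s\<^sup>2 / r\<^sup>2" using r(1) by (simp add: power_mult_distrib)
      then have "2 * R' * 1 \<le> 2 * R' * (V\<^sup>2 * s\<^sup>2 / r\<^sup>2)" using R'nn by (intro mult_left_mono) auto
      then have "2 * R' \<le> 2 * R' * V\<^sup>2 / r\<^sup>2 * s\<^sup>2" by (simp add: field_simps)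
      then have "norm (G x) \<le> 2 * R' * V\<^sup>2 / r\<^sup>2 * s\<^sup>2" using Gb[OF x] by linarith
      also have "\<dots> \<le> C * s\<^sup>2" using Cs t1 by linarith
      finally show ?thesis by (simp add: s_def)
    qed
  qed
  then show ?thesis unfolding U_def G_def by blast
qed

end

theorem mainTheorem6:
  fixes \<Gamma> \<Omega> :: "'a::euclidean_space set" and \<nu> :: "'a \<Rightarrow> 'a" and A :: "'a \<Rightarrow> 'a \<Rightarrow> 'a"
    and \<alpha> c0 c1 \<delta> :: real and \<phi> :: "'a \<Rightarrow> real" and \<gamma> :: "'a \<Rightarrow> real \<Rightarrow> 'a"
    and p :: "'a \<Rightarrow> 'a"
  assumes dim: "DIM('a) = 2 \<or> DIM('a) = 3"
    and \<Gamma>_compact: "compact \<Gamma>" and \<Gamma>_connected: "connected \<Gamma>" and \<Gamma>_ne: "\<Gamma> \<noteq> {}"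
    and \<Omega>_open: "open \<Omega>" and \<Gamma>_sub: "\<Gamma> \<subseteq> \<Omega>"
    and d_smooth: "smooth_on \<Omega> (signed_dist \<Gamma>)"
    and closest: "\<forall>x\<in>\<Omega>. hat_p \<Gamma> x \<in> \<Gamma> \<and> dist x (hat_p \<Gamma> x) = infdist x \<Gamma>"
    and normal: "\<forall>x\<in>\<Gamma>. is_unit_outer_normal \<Gamma> x (\<nu> x)"
    and A_linear: "\<forall>x\<in>\<Gamma>. linear (A x)"
    and A_C2: "\<forall>i\<in>Basis. \<forall>j\<in>Basis. Ck_on_surface 2 \<Gamma> (\<lambda>x. i \<bullet> A x j)"
    and A_sym: "\<forall>x\<in>\<Gamma>. \<forall>i\<in>Basis. \<forall>j\<in>Basis. i \<bullet> A x j = j \<bullet> A x i"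
    and A_tan_nu: "\<forall>x\<in>\<Gamma>. \<forall>\<xi>\<in>tangent_space \<Gamma> x. \<xi> \<bullet> A x (\<nu> x) = 0"
    and \<alpha>_pos: "\<alpha> > 0"
    and A_ell: "\<forall>x\<in>\<Gamma>. \<forall>\<xi>\<in>tangent_space \<Gamma> x. \<xi> \<bullet> A x \<xi> \<ge> \<alpha> * (norm \<xi>)\<^sup>2"
    and A_nu: "\<forall>x\<in>\<Gamma>. A x (\<nu> x) = \<nu> x"
    and \<phi>_smooth: "\<exists>W. open W \<and> closure \<Omega> \<subseteq> W \<and> smooth_on W \<phi>"
    and \<Gamma>_level: "\<Gamma> = {x\<in>closure \<Omega>. \<phi> x = 0}"
    and c0_pos: "0 < c0"
    and grad_bounds: "\<forall>x\<in>closure \<Omega>. c0 \<le> norm (grad \<phi> x) \<and> norm (grad \<phi> x) \<le> c1"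
    and \<delta>_pos: "\<delta> > 0"
    and ode: "\<forall>q\<in>\<Gamma>. \<gamma> q 0 = q \<and> (\<forall>s\<in>{-\<delta><..<\<delta>}. \<gamma> q s \<in> closure \<Omega> \<and>
                 (\<gamma> q has_vector_derivative flow_field A \<phi> q (\<gamma> q s)) (at s))"
    and ode_unique: "\<forall>q\<in>\<Gamma>. \<forall>\<eta>. \<eta> 0 = q \<and> (\<forall>s\<in>{-\<delta><..<\<delta>}. \<eta> s \<in> closure \<Omega> \<and>
                 (\<eta> has_vector_derivative flow_field A \<phi> q (\<eta> s)) (at s))
                 \<longrightarrow> (\<forall>s\<in>{-\<delta><..<\<delta>}. \<eta> s = \<gamma> q s)"
    and F_bij: "bij_betw (\<lambda>(q, s). \<gamma> q s) (\<Gamma> \<times> {-\<delta><..<\<delta>}) {x\<in>\<Omega>. \<bar>\<phi> x\<bar> < \<delta>}"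
    and p_inv: "\<forall>x\<in>{x\<in>\<Omega>. \<bar>\<phi> x\<bar> < \<delta>}. p x \<in> \<Gamma> \<and> \<gamma> (p x) (\<phi> x) = x"
    and p_C2: "Ck_on 2 {x\<in>\<Omega>. \<bar>\<phi> x\<bar> < \<delta>} p"
  shows "\<exists>C. \<forall>x\<in>{x\<in>\<Omega>. \<bar>\<phi> x\<bar> < \<delta>}. norm (p x - hat_p \<Gamma> x) \<le> C * (\<phi> x)\<^sup>2"
proof -
  have S: "setting \<Gamma> \<Omega> \<nu> A \<alpha> c0 c1 \<delta> \<phi> \<gamma> p"
    unfolding setting_def by (intro conjI) (rule assms)+
  show ?thesis by (rule setting.main_result[OF S])
qed

end
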